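(* Let $r\ge 1$ and let $H$ be a multi-hypergraph in which every hyperedge has size at most $r$, let $\mathcal{M}$ be a matroid of rank $d\ge 1$ and $\gamma\colon E(H)\to E(\mathcal{M})$. Then at least one of the following holds: (1) $(H,\gamma)$ contains an independent matching of size $d$; or (2) there exist an integer $k\ge 1$ and a vertex set $U\subseteq V(H)$ with $|U|\le(2r-1)(k-1)$ such that $H-U$ contains an independent matching $M$ of size $d-k$ with $\mathrm{span}(\gamma(M))=\mathrm{span}(\gamma(E(H-U)))$.
   Context: A multi-hypergraph $H=(V,E)$ consists of a finite set $V$ and a multiset $E$ of non-empty subsets of $V$ (hyperedges); distinct copies of the same subset are distinct hyperedges and may receive different labels. For $U\subseteq V(H)$, $H-U$ has vertex set $V(H)\setminus U$ and all hyperedges of $H$ disjoint from $U$, with the labelling restricted accordingly. $\mathrm{span}$ denotes the closure operator of $\mathcal{M}$. An independent matching in $(H,\gamma)$ is a collection $M$ of pairwise vertex-disjoint hyperedges with pairwise distinct labels such that $\gamma(M)$ is independent in $\mathcal{M}$ (the empty collection qualifies). *)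

theory Defs
  imports Main
begin

definition matroid :: "'b set \<Rightarrow> ('b set \<Rightarrow> bool) \<Rightarrow> bool" where
  "matroid E indep \<longleftrightarrow> finite E \<and> indep {} \<and>
     (\<forall>X. indep X \<longrightarrow> X \<subseteq> E) \<and>
     (\<forall>X Y. indep X \<longrightarrow> Y \<subseteq> X \<longrightarrow> indep Y) \<and>
     (\<forall>X Y. indep X \<longrightarrow> indep Y \<longrightarrow> card X < card Y \<longrightarrow>
        (\<exists>y\<in>Y - X. indep (insert y X)))"

definition mrank :: "('b set \<Rightarrow> bool) \<Rightarrow> 'b set \<Rightarrow> nat" where
  "mrank indep X = Max (card ` {I. I \<subseteq> X \<and> indep I})"

definition span :: "'b set \<Rightarrow> ('b set \<Rightarrow> bool) \<Rightarrow> 'b set \<Rightarrow> 'b set" where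
  "span E indep X = {e \<in> E. mrank indep (insert e X) = mrank indep X}"

(* Parallel hyperedges are distinct identifiers with equal ends. *)
definition hypergraph :: "'a set \<Rightarrow> 'e set \<Rightarrow> ('e \<Rightarrow> 'a set) \<Rightarrow> bool" where
  "hypergraph V Ed ends \<longleftrightarrow> finite V \<and> finite Ed \<and>
     (\<forall>e\<in>Ed. ends e \<noteq> {} \<and> ends e \<subseteq> V)"

definition del_edges :: "'e set \<Rightarrow> ('e \<Rightarrow> 'a set) \<Rightarrow> 'a set \<Rightarrow> 'e set" where
  "del_edges Ed ends U = {e \<in> Ed. ends e \<inter> U = {}}"

definition indep_matching ::
  "'e set \<Rightarrow> ('e \<Rightarrow> 'a set) \<Rightarrow> ('b set \<Rightarrow> bool) \<Rightarrow> ('e \<Rightarrow> 'b) \<Rightarrow> 'e set \<Rightarrow> bool" where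
  "indep_matching Ed ends indep \<gamma> M \<longleftrightarrow> M \<subseteq> Ed \<and>
     (\<forall>e\<in>M. \<forall>f\<in>M. e \<noteq> f \<longrightarrow> ends e \<inter> ends f = {}) \<and>
     inj_on \<gamma> M \<and> indep (\<gamma> ` M)"

end

theory Submission
  imports Defs
begin

locale mat = fixes E :: "'b set" and indep :: "'b set \<Rightarrow> bool"
  assumes matroid: "matroid E indep"
begin

lemma finE: "finite E" using matroid unfolding matroid_def by blast
lemma indep_empty: "indep {}" using matroid unfolding matroid_def by blast
lemma indep_sub: "indep X \<Longrightarrow> X \<subseteq> E" using matroid unfolding matroid_def by blast
lemma indep_mono: "indep X \<Longrightarrow> Y \<subseteq> X \<Longrightarrow> indep Y" using matroid unfolding matroid_def by blast
lemma aug: "indep X \<Longrightarrow> indep Y \<Longrightarrow> card X < card Y \<Longrightarrow> \<exists>y\<in>Y - X. indep (insert y X)"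
  using matroid unfolding matroid_def by blast
lemma indep_fin: "indep X \<Longrightarrow> finite X" using indep_sub finE finite_subset by blast

abbreviation rk where "rk \<equiv> mrank indep"
abbreviation sp where "sp \<equiv> span E indep"

lemma fin_sets: "finite {I. I \<subseteq> X \<and> indep I}"
  by (rule finite_subset[of _ "Pow E"]) (use indep_sub finE in auto)

lemma rk_ex: "\<exists>I. I \<subseteq> X \<and> indep I \<and> card I = rk X"
proof -
  have ne: "card ` {I. I \<subseteq> X \<and> indep I} \<noteq> {}" using indep_empty by auto
  have "rk X \<in> card ` {I. I \<subseteq> X \<and> indep I}"
    unfolding mrank_def using Max_in[OF finite_imageI[OF fin_sets] ne] .
  then show ?thesis by auto
qed

lemma rk_ge: "I \<subseteq> X \<Longrightarrow> indep I \<Longrightarrow> card I \<le> rk X"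
  unfolding mrank_def by (rule Max_ge) (use fin_sets in auto)

lemma rk_mono: "X \<subseteq> Y \<Longrightarrow> rk X \<le> rk Y"
proof -
  assume XY: "X \<subseteq> Y"
  obtain I where I: "I \<subseteq> X" "indep I" "card I = rk X" using rk_ex by blast
  have "I \<subseteq> Y" using I XY by blast
  then show ?thesis using rk_ge[of I Y] I by simp
qed

lemma rk_le_card: "finite X \<Longrightarrow> rk X \<le> card X"
proof -
  assume f: "finite X"
  obtain I where I: "I \<subseteq> X" "indep I" "card I = rk X" using rk_ex by blast
  show ?thesis using card_mono[OF f I(1)] I by simp
qed

lemma indep_rk: "indep X \<Longrightarrow> rk X = card X"
proof -
  assume i: "indep X"
  have "card X \<le> rk X" using rk_ge[of X X] i by simp
  moreover have "rk X \<le> card X" using rk_le_card indep_fin[OF i] by blast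
  ultimately show ?thesis by simp
qed

lemma rk_indep: "finite X \<Longrightarrow> rk X = card X \<Longrightarrow> indep X"
proof -
  assume f: "finite X" and e: "rk X = card X"
  obtain I where I: "I \<subseteq> X" "indep I" "card I = rk X" using rk_ex by blast
  then have "I = X" using card_subset_eq[OF f] e by simp
  then show ?thesis using I by simp
qed

lemma extend: "indep I \<Longrightarrow> I \<subseteq> X \<Longrightarrow> \<exists>J. I \<subseteq> J \<and> J \<subseteq> X \<and> indep J \<and> card J = rk X"
proof (induction "rk X - card I" arbitrary: I rule: less_induct)
  case less
  have le: "card I \<le> rk X" using rk_ge[OF less(3) less(2)] .
  show ?case
  proof (cases "card I = rk X")
    case True then show ?thesis using less(2,3) by blast
  next
    case False
    then have lt: "card I < rk X" using le by simp
    obtain K where K: "K \<subseteq> X" "indep K" "card K = rk X" using rk_ex by blast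
    have "card I < card K" using lt K(3) by simp
    then obtain y where y: "y \<in> K - I" "indep (insert y I)" using aug[OF less(2) K(2)] by blast
    have fI: "finite I" using indep_fin less(2) by blast
    have ci: "card (insert y I) = Suc (card I)" using y(1) fI by simp
    have m: "rk X - card (insert y I) < rk X - card I" using ci lt by simp
    have s: "insert y I \<subseteq> X" using y(1) K(1) less(3) by blast
    obtain J where J: "insert y I \<subseteq> J" "J \<subseteq> X" "indep J" "card J = rk X"
      using less(1)[OF m y(2) s] by blast
    have "I \<subseteq> J" using J(1) by blast
    then show ?thesis using J by blast
  qed
qed

lemma submod: "rk (X \<union> Y) + rk (X \<inter> Y) \<le> rk X + rk Y"
proof -
  obtain I where I: "I \<subseteq> X \<inter> Y" "indep I" "card I = rk (X \<inter> Y)" using rk_ex by blast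
  obtain J where J: "I \<subseteq> J" "J \<subseteq> X \<union> Y" "indep J" "card J = rk (X \<union> Y)"
    using extend[OF I(2)] I(1) by (metis Int_lower1 le_supI1 order_trans)
  have fJ: "finite J" using indep_fin J by blast
  have a: "card (J \<inter> X) \<le> rk X" using rk_ge[of "J \<inter> X" X] indep_mono[OF J(3)] by auto
  have b: "card (J \<inter> Y) \<le> rk Y" using rk_ge[of "J \<inter> Y" Y] indep_mono[OF J(3)] by auto
  have c: "card (J \<inter> X) + card (J \<inter> Y) = card ((J \<inter> X) \<union> (J \<inter> Y)) + card ((J \<inter> X) \<inter> (J \<inter> Y))"
    using card_Un_Int[of "J \<inter> X" "J \<inter> Y"] fJ by auto
  have d: "(J \<inter> X) \<union> (J \<inter> Y) = J" using J(2) by auto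
  have e: "card I \<le> card ((J \<inter> X) \<inter> (J \<inter> Y))"
    using card_mono[of "(J \<inter> X) \<inter> (J \<inter> Y)" I] fJ I(1) J(1) by auto
  have c': "card (J \<inter> X) + card (J \<inter> Y) = card J + card ((J \<inter> X) \<inter> (J \<inter> Y))" using c d by simp
  show ?thesis using a b c' e I(3) J(4) by linarith
qed

lemma rk_insert: "rk (insert a X) \<le> Suc (rk X)"
proof -
  obtain I where I: "I \<subseteq> insert a X" "indep I" "card I = rk (insert a X)" using rk_ex by blast
  have "I - {a} \<subseteq> X" using I by auto
  then have "card (I - {a}) \<le> rk X" using rk_ge indep_mono[OF I(2)] by blast
  moreover have "card I \<le> Suc (card (I - {a}))"
  proof (cases "a \<in> I")
    case True then show ?thesis using card_Suc_Diff1[OF indep_fin[OF I(2)] True] by simp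
  next
    case False then show ?thesis by simp
  qed
  ultimately show ?thesis using I by linarith
qed

lemma sp_sub: "X \<subseteq> E \<Longrightarrow> X \<subseteq> sp X"
  unfolding span_def by (auto simp: insert_absorb)

lemma sp_E: "sp X \<subseteq> E" unfolding span_def by auto

lemma mem_spI: "a \<in> E \<Longrightarrow> rk (insert a X) = rk X \<Longrightarrow> a \<in> sp X" unfolding span_def by auto
lemma mem_spD1: "a \<in> sp X \<Longrightarrow> a \<in> E" unfolding span_def by auto
lemma mem_spD2: "a \<in> sp X \<Longrightarrow> rk (insert a X) = rk X" unfolding span_def by auto

lemma notin_sp_indep: "indep A \<Longrightarrow> a \<in> E \<Longrightarrow> a \<notin> sp A \<Longrightarrow> indep (insert a A) \<and> a \<notin> A"
proof -
  assume A: "indep A" "a \<in> E" "a \<notin> sp A"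
  have ne: "rk (insert a A) \<noteq> rk A" using A(3) mem_spI[OF A(2)] by blast
  have aA: "a \<notin> A" using ne by (auto simp: insert_absorb)
  have "rk (insert a A) \<le> Suc (rk A)" by (rule rk_insert)
  then have "rk (insert a A) \<le> Suc (card A)" using indep_rk[OF A(1)] by simp
  moreover have "rk A \<le> rk (insert a A)" by (rule rk_mono) (rule subset_insertI)
  ultimately have "rk (insert a A) = card (insert a A)"
    using ne indep_rk[OF A(1)] aA indep_fin[OF A(1)] by simp
  then show ?thesis using rk_indep indep_fin[OF A(1)] aA by simp
qed

lemma in_sp_not: "indep (insert a A) \<Longrightarrow> a \<notin> A \<Longrightarrow> a \<notin> sp A"
proof
  assume A: "indep (insert a A)" "a \<notin> A" "a \<in> sp A"
  have iA: "indep A" using indep_mono[OF A(1) subset_insertI] .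
  have "rk (insert a A) = rk A" using mem_spD2[OF A(3)] .
  moreover have "rk (insert a A) = card (insert a A)" by (rule indep_rk[OF A(1)])
  moreover have "rk A = card A" by (rule indep_rk[OF iA])
  moreover have "card (insert a A) = Suc (card A)" using A(2) indep_fin[OF iA] by simp
  ultimately show False by simp
qed

lemma rk_union_sp_aux: "finite Y \<Longrightarrow> Y \<subseteq> sp X \<Longrightarrow> rk (X \<union> Y) = rk X"
proof (induction Y rule: finite_induct)
  case empty then show ?case by simp
next
  case (insert y Y)
  have IH: "rk (X \<union> Y) = rk X" using insert by auto
  have "y \<in> sp X" using insert by blast
  then have yX: "rk (insert y X) = rk X" by (rule mem_spD2)
  have s: "rk (insert y X \<union> (X \<union> Y)) + rk (insert y X \<inter> (X \<union> Y)) \<le> rk (insert y X) + rk (X \<union> Y)"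
    by (rule submod)
  have "rk X \<le> rk (insert y X \<inter> (X \<union> Y))" by (rule rk_mono) auto
  moreover have eq: "insert y X \<union> (X \<union> Y) = X \<union> insert y Y" by auto
  moreover have "rk (X \<union> insert y Y) + rk (insert y X \<inter> (X \<union> Y)) \<le> rk X + rk X"
    using s yX IH eq by simp
  ultimately have "rk (X \<union> insert y Y) \<le> rk X" by linarith
  moreover have "rk X \<le> rk (X \<union> insert y Y)" by (rule rk_mono) auto
  ultimately show ?case by simp
qed

lemma rk_union_sp: "Y \<subseteq> sp X \<Longrightarrow> rk (X \<union> Y) = rk X"
proof -
  assume Y: "Y \<subseteq> sp X"
  have "Y \<subseteq> E" using Y sp_E by (rule order_trans)
  then have "finite Y" using finE by (rule finite_subset)
  then show ?thesis using rk_union_sp_aux Y by blast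
qed

lemma sp_mono: "X \<subseteq> Y \<Longrightarrow> sp X \<subseteq> sp Y"
proof
  fix e assume XY: "X \<subseteq> Y" and e: "e \<in> sp X"
  have eX: "rk (insert e X) = rk X" "e \<in> E" using mem_spD2[OF e] mem_spD1[OF e] by auto
  have s: "rk (insert e X \<union> Y) + rk (insert e X \<inter> Y) \<le> rk (insert e X) + rk Y" by (rule submod)
  have "rk X \<le> rk (insert e X \<inter> Y)" by (rule rk_mono) (use XY in auto)
  moreover have eq: "insert e X \<union> Y = insert e Y" using XY by auto
  moreover have "rk (insert e Y) + rk (insert e X \<inter> Y) \<le> rk X + rk Y" using s eX eq by simp
  ultimately have "rk (insert e Y) \<le> rk Y" by linarith
  moreover have "rk Y \<le> rk (insert e Y)" by (rule rk_mono) auto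
  ultimately show "e \<in> sp Y" using mem_spI[OF eX(2)] by simp
qed

lemma sp_trans: "X \<subseteq> sp Y \<Longrightarrow> sp X \<subseteq> sp Y"
proof
  fix e assume XY: "X \<subseteq> sp Y" and e: "e \<in> sp X"
  have eE: "e \<in> E" using mem_spD1[OF e] .
  have "e \<in> sp (X \<union> Y)" using sp_mono[of X "X \<union> Y"] e by auto
  then have 1: "rk (insert e (X \<union> Y)) = rk (X \<union> Y)" by (rule mem_spD2)
  have 2: "rk (Y \<union> X) = rk Y" using rk_union_sp[OF XY] .
  have "X \<subseteq> sp (insert e Y)" using XY sp_mono[of Y "insert e Y"] by auto
  then have 3: "rk (insert e Y \<union> X) = rk (insert e Y)" using rk_union_sp by blast
  have "insert e (X \<union> Y) = insert e Y \<union> X" "X \<union> Y = Y \<union> X" by auto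
  then have "rk (insert e Y) = rk Y" using 1 2 3 by simp
  then show "e \<in> sp Y" using mem_spI[OF eE] by blast
qed

lemma sp_eq: "X \<subseteq> sp Y \<Longrightarrow> Y \<subseteq> sp X \<Longrightarrow> sp X = sp Y"
  using sp_trans by blast

lemma sp_inter: "indep A \<Longrightarrow> P \<subseteq> A \<Longrightarrow> Q \<subseteq> A \<Longrightarrow> y \<in> sp P \<Longrightarrow> y \<in> sp Q \<Longrightarrow> y \<in> sp (P \<inter> Q)"
proof -
  assume A: "indep A" "P \<subseteq> A" "Q \<subseteq> A" "y \<in> sp P" "y \<in> sp Q"
  have iP1: "indep P" using indep_mono[OF A(1) A(2)] .
  have iP2: "indep Q" using indep_mono[OF A(1) A(3)] .
  have iP3: "indep (P \<union> Q)" using indep_mono[OF A(1)] A(2,3) by (meson Un_least)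
  have iP4: "indep (P \<inter> Q)" using indep_mono[OF iP1] by (meson Int_lower1)
  note iP = iP1 iP2 iP3 iP4
  have fin: "finite P" "finite Q" using indep_fin iP by auto
  have a: "rk (insert y P) = card P" using mem_spD2[OF A(4)] indep_rk[OF iP1] by simp
  have b: "rk (insert y Q) = card Q" using mem_spD2[OF A(5)] indep_rk[OF iP2] by simp
  have s: "rk (insert y P \<union> insert y Q) + rk (insert y P \<inter> insert y Q) \<le> rk (insert y P) + rk (insert y Q)"
    by (rule submod)
  have "card (P \<union> Q) \<le> rk (insert y P \<union> insert y Q)"
    using indep_rk[OF iP(3)] rk_mono[of "P \<union> Q" "insert y P \<union> insert y Q"] by auto
  moreover have "insert y P \<inter> insert y Q = insert y (P \<inter> Q)" by auto
  moreover have "card (P \<union> Q) + card (P \<inter> Q) = card P + card Q" using card_Un_Int fin by metis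
  moreover have "rk (insert y P \<union> insert y Q) + rk (insert y (P \<inter> Q)) \<le> card P + card Q"
    using s a b \<open>insert y P \<inter> insert y Q = insert y (P \<inter> Q)\<close> by simp
  ultimately have "rk (insert y (P \<inter> Q)) \<le> rk (P \<inter> Q)" using indep_rk[OF iP(4)] by linarith
  moreover have "rk (P \<inter> Q) \<le> rk (insert y (P \<inter> Q))" by (rule rk_mono) auto
  ultimately show ?thesis using mem_spI[OF mem_spD1[OF A(4)]] by simp
qed

lemma exch_b: "indep A \<Longrightarrow> S \<subseteq> A \<Longrightarrow> y \<in> sp A \<Longrightarrow> y \<notin> sp S \<Longrightarrow> \<exists>b\<in>A - S. y \<notin> sp (A - {b})"
proof (rule ccontr)
  assume A: "indep A" "S \<subseteq> A" "y \<in> sp A" "y \<notin> sp S" and n: "\<not> (\<exists>b\<in>A - S. y \<notin> sp (A - {b}))"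
  have fin: "finite (A - S)" using indep_fin[OF A(1)] by simp
  have "\<forall>R. R \<subseteq> A - S \<longrightarrow> y \<in> sp (A - R)"
  proof
    fix R show "R \<subseteq> A - S \<longrightarrow> y \<in> sp (A - R)"
    proof
      assume "R \<subseteq> A - S"
      then have "finite R" using fin finite_subset by blast
      then show "y \<in> sp (A - R)" using \<open>R \<subseteq> A - S\<close>
      proof (induction R rule: finite_induct)
        case empty then show ?case using A by simp
      next
        case (insert b R)
        have "y \<in> sp (A - R)" using insert by auto
        moreover have "y \<in> sp (A - {b})" using n insert by auto
        ultimately have "y \<in> sp ((A - R) \<inter> (A - {b}))" using sp_inter[OF A(1)] by blast
        moreover have "(A - R) \<inter> (A - {b}) = A - insert b R" by auto
        ultimately show ?case by simp
      qed
    qed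
  qed
  then have "y \<in> sp (A - (A - S))" by blast
  moreover have "A - (A - S) = S" using A(2) by auto
  ultimately show False using A(4) by simp
qed

lemma swap:
  assumes A: "indep A2" "A \<subseteq> A2" "S \<subseteq> A" "y \<in> sp A" "y \<notin> sp S"
  shows "\<exists>b\<in>A - S. y \<notin> A2 - {b} \<and> indep (insert y (A2 - {b})) \<and>
           (\<forall>A3. A \<subseteq> A3 \<longrightarrow> A3 \<subseteq> A2 \<longrightarrow> sp (insert y (A3 - {b})) = sp A3)"
proof -
  have iA: "indep A" using indep_mono A by blast
  obtain b where b: "b \<in> A - S" "y \<notin> sp (A - {b})" using exch_b[OF iA A(3) A(4) A(5)] by blast
  have yE: "y \<in> E" using mem_spD1[OF A(4)] .
  have iAb: "indep (A - {b})" using indep_mono[OF iA] by blast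
  have ins: "indep (insert y (A - {b}))" "y \<notin> A - {b}" using notin_sp_indep[OF iAb yE b(2)] by auto
  have bE: "b \<in> E" using b indep_sub[OF iA] by blast
  have "insert b (insert y (A - {b})) = insert y A" using b by auto
  then have "rk (insert b (insert y (A - {b}))) = rk A" using mem_spD2[OF A(4)] by simp
  moreover have "rk (insert y (A - {b})) = card A"
  proof -
    have "card A > 0" using b indep_fin[OF iA] card_gt_0_iff by blast
    then show ?thesis using indep_rk[OF ins(1)] ins(2) indep_fin[OF iA] b by (simp add: card.remove)
  qed
  ultimately have bsp: "b \<in> sp (insert y (A - {b}))" using mem_spI[OF bE] indep_rk[OF iA] by simp
  have SP: "\<forall>A3. A \<subseteq> A3 \<longrightarrow> A3 \<subseteq> A2 \<longrightarrow> sp (insert y (A3 - {b})) = sp A3"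
  proof (intro allI impI)
    fix A3 assume a3: "A \<subseteq> A3" "A3 \<subseteq> A2"
    have A3E: "A3 \<subseteq> E" using a3 indep_sub A(1) by blast
    have 1: "insert y (A3 - {b}) \<subseteq> sp A3"
      using sp_mono[OF a3(1)] A(4) sp_sub[OF A3E] by auto
    have "b \<in> sp (insert y (A3 - {b}))" using bsp sp_mono[of "insert y (A - {b})" "insert y (A3 - {b})"] a3 by auto
    moreover have "A3 - {b} \<subseteq> sp (insert y (A3 - {b}))" using sp_sub[of "insert y (A3 - {b})"] A3E yE by auto
    ultimately have 2: "A3 \<subseteq> sp (insert y (A3 - {b}))" by auto
    show "sp (insert y (A3 - {b})) = sp A3" using sp_eq[OF 1 2] .
  qed
  have yn: "y \<notin> A2 - {b}"
  proof
    assume yA2: "y \<in> A2 - {b}"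
    show False
    proof (cases "y \<in> A")
      case True then show False using ins(2) yA2 by auto
    next
      case False
      have "indep (insert y A)" using indep_mono[OF A(1)] yA2 A(2) by auto
      then show False using in_sp_not False A(4) by blast
    qed
  qed
  have spe: "sp (insert y (A2 - {b})) = sp A2" using SP A(2) by blast
  have A2E: "A2 \<subseteq> E" using indep_sub A(1) by blast
  have "A2 \<subseteq> sp (insert y (A2 - {b}))" using spe sp_sub[OF A2E] by simp
  then have "rk (insert y (A2 - {b}) \<union> A2) = rk (insert y (A2 - {b}))" using rk_union_sp by blast
  moreover have "rk A2 \<le> rk (insert y (A2 - {b}) \<union> A2)" by (rule rk_mono) auto
  moreover have cc: "card (insert y (A2 - {b})) = card A2"
  proof -
    have "b \<in> A2" using b A(2) by blast
    then have "Suc (card (A2 - {b})) = card A2" by (rule card_Suc_Diff1[OF indep_fin[OF A(1)]])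
    moreover have "card (insert y (A2 - {b})) = Suc (card (A2 - {b}))"
      by (rule card_insert_disjoint) (use yn indep_fin[OF A(1)] in auto)
    ultimately show ?thesis by simp
  qed
  moreover have fi: "finite (insert y (A2 - {b}))" using indep_fin[OF A(1)] by simp
  ultimately have "rk (insert y (A2 - {b})) = card (insert y (A2 - {b}))"
    using rk_le_card[OF fi] indep_rk[OF A(1)] by linarith
  then have "indep (insert y (A2 - {b}))" using rk_indep[OF fi] by blast
  then have "y \<notin> A2 - {b} \<and> indep (insert y (A2 - {b})) \<and>
           (\<forall>A3. A \<subseteq> A3 \<longrightarrow> A3 \<subseteq> A2 \<longrightarrow> sp (insert y (A3 - {b})) = sp A3)" using yn SP by simp
  then show ?thesis using b(1) by (rule_tac bexI)
qed

end

locale hm = mat E indep for E :: "'b set" and indep +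
  fixes V :: "'a set" and Ed :: "'e set" and ends :: "'e \<Rightarrow> 'a set" and \<gamma> :: "'e \<Rightarrow> 'b"
    and r d :: nat
  assumes r1: "r \<ge> 1" and hg: "hypergraph V Ed ends" and rb: "\<forall>e\<in>Ed. card (ends e) \<le> r"
    and gE: "\<forall>e\<in>Ed. \<gamma> e \<in> E" and d1: "d \<ge> 1"
begin

abbreviation imatch where "imatch M \<equiv> indep_matching Ed ends indep \<gamma> M"

lemma finV: "finite V" using hg unfolding hypergraph_def by blast
lemma finEd: "finite Ed" using hg unfolding hypergraph_def by blast
lemma ends_ne: "e \<in> Ed \<Longrightarrow> ends e \<noteq> {}" using hg unfolding hypergraph_def by blast
lemma ends_V: "e \<in> Ed \<Longrightarrow> ends e \<subseteq> V" using hg unfolding hypergraph_def by blast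
lemma ends_fin: "e \<in> Ed \<Longrightarrow> finite (ends e)" using ends_V finV finite_subset by blast

lemma im_sub: "imatch M \<Longrightarrow> M \<subseteq> Ed" unfolding indep_matching_def by blast
lemma im_disj: "imatch M \<Longrightarrow> e \<in> M \<Longrightarrow> f \<in> M \<Longrightarrow> e \<noteq> f \<Longrightarrow> ends e \<inter> ends f = {}"
  unfolding indep_matching_def by blast
lemma im_inj: "imatch M \<Longrightarrow> inj_on \<gamma> M" unfolding indep_matching_def by blast
lemma im_ind: "imatch M \<Longrightarrow> indep (\<gamma> ` M)" unfolding indep_matching_def by blast
lemma im_fin: "imatch M \<Longrightarrow> finite M" using im_sub finEd finite_subset by blast
lemma imI: "M \<subseteq> Ed \<Longrightarrow> (\<And>e f. e \<in> M \<Longrightarrow> f \<in> M \<Longrightarrow> e \<noteq> f \<Longrightarrow> ends e \<inter> ends f = {}) \<Longrightarrow>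
    inj_on \<gamma> M \<Longrightarrow> indep (\<gamma> ` M) \<Longrightarrow> imatch M"
  unfolding indep_matching_def by blast

definition Bs :: "'e set \<Rightarrow> 'e set \<Rightarrow> 'e \<Rightarrow> 'e set" where
  "Bs M T x = {f \<in> M - T. ends f \<inter> ends x \<noteq> {}}"

fun Tf :: "'e set \<Rightarrow> 'e list \<Rightarrow> 'e set" where
  "Tf M [] = {}"
| "Tf M (x # rs) = Tf M rs \<union> Bs M (Tf M rs) x"

fun Uf :: "'e set \<Rightarrow> 'e list \<Rightarrow> 'a set" where
  "Uf M [] = {}"
| "Uf M (x # rs) = Uf M rs \<union> ends x \<union> \<Union>(ends ` Bs M (Tf M rs) x)"

fun cnts :: "'e set \<Rightarrow> 'e list \<Rightarrow> nat list" where
  "cnts M [] = []"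
| "cnts M (x # rs) = card (Bs M (Tf M rs) x) # cnts M rs"

fun Valid :: "'e set \<Rightarrow> 'e list \<Rightarrow> bool" where
  "Valid M [] = True"
| "Valid M (x # rs) = (Valid M rs \<and> x \<in> Ed \<and> ends x \<inter> Uf M rs = {} \<and>
      \<gamma> x \<notin> sp (\<gamma> ` (M - Tf M rs)) \<and> Bs M (Tf M rs) x \<noteq> {})"

lemma Bs_sub: "Bs M T x \<subseteq> M - T" unfolding Bs_def by blast

lemma Tf_sub: "Tf M rs \<subseteq> M"
  by (induction rs) (auto simp: Bs_def)

lemma Tf_U: "f \<in> Tf M rs \<Longrightarrow> ends f \<subseteq> Uf M rs"
  by (induction rs) auto

lemma lev_U: "z \<in> set rs \<Longrightarrow> ends z \<subseteq> Uf M rs"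
  by (induction rs) auto

lemma avoid: "imatch M \<Longrightarrow> f \<in> M \<Longrightarrow> f \<notin> Tf M rs \<Longrightarrow> ends f \<inter> Uf M rs = {}"
proof (induction rs)
  case Nil then show ?case by simp
next
  case (Cons x rs)
  have f1: "f \<notin> Tf M rs" "f \<notin> Bs M (Tf M rs) x" using Cons.prems by auto
  have a: "ends f \<inter> Uf M rs = {}" using Cons.IH Cons.prems(1,2) f1(1) by blast
  have b: "ends f \<inter> ends x = {}" using f1 Cons.prems(2) unfolding Bs_def by blast
  have c: "ends f \<inter> ends g = {}" if g: "g \<in> Bs M (Tf M rs) x" for g
  proof -
    have "g \<in> M" "g \<noteq> f" using g f1(2) Bs_sub by auto
    then show ?thesis using im_disj[OF Cons.prems(1) Cons.prems(2)] by blast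
  qed
  show ?case using a b c by auto
qed

lemma x_avoid_M: "imatch M \<Longrightarrow> ends x \<inter> Uf M rs = {} \<Longrightarrow> Bs M (Tf M rs) x = {} \<Longrightarrow> f \<in> M \<Longrightarrow> ends f \<inter> ends x = {}"
proof -
  assume a: "imatch M" "ends x \<inter> Uf M rs = {}" "Bs M (Tf M rs) x = {}" "f \<in> M"
  show ?thesis
  proof (cases "f \<in> Tf M rs")
    case True then show ?thesis using Tf_U a(2) by blast
  next
    case False then show ?thesis using a(3,4) unfolding Bs_def by blast
  qed
qed

lemma U_V: "Valid M rs \<Longrightarrow> M \<subseteq> Ed \<Longrightarrow> Uf M rs \<subseteq> V"
proof (induction rs)
  case Nil then show ?case by simp
next
  case (Cons x rs)
  have "Bs M (Tf M rs) x \<subseteq> Ed" using Bs_sub Cons.prems(2) by blast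
  then have "\<Union>(ends ` Bs M (Tf M rs) x) \<subseteq> V" using ends_V by blast
  moreover have "ends x \<subseteq> V" using ends_V Cons.prems(1) by simp
  ultimately show ?case using Cons by simp
qed

lemma blk:
  assumes x: "x \<in> Ed" and B: "B \<subseteq> Ed" "finite B" "B \<noteq> {}" and hit: "\<forall>f\<in>B. ends f \<inter> ends x \<noteq> {}"
  shows "card (ends x \<union> \<Union>(ends ` B)) \<le> (2*r-1) * card B"
proof -
  have eq: "ends x \<union> \<Union>(ends ` B) = ends x \<union> (\<Union>f\<in>B. ends f - ends x)" by blast
  have s1: "card (ends x \<union> (\<Union>f\<in>B. ends f - ends x)) \<le> card (ends x) + card (\<Union>f\<in>B. ends f - ends x)"
    by (rule card_Un_le)
  have s2: "card (\<Union>f\<in>B. ends f - ends x) \<le> (\<Sum>f\<in>B. card (ends f - ends x))"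
    by (rule card_UN_le[OF B(2)])
  have s3: "(\<Sum>f\<in>B. card (ends f - ends x)) \<le> (\<Sum>f\<in>B. r - 1)"
  proof (rule sum_mono)
    fix f assume f: "f \<in> B"
    have fe: "f \<in> Ed" using f B(1) by blast
    have fin: "finite (ends f)" using ends_fin fe .
    have "ends f - ends x \<subset> ends f" using hit f by blast
    then have "card (ends f - ends x) < card (ends f)" using psubset_card_mono fin by blast
    moreover have "card (ends f) \<le> r" using rb fe by blast
    ultimately show "card (ends f - ends x) \<le> r - 1" by linarith
  qed
  have s4: "(\<Sum>f\<in>B. r - 1) = card B * (r - 1)" by simp
  have 2: "card (ends x) \<le> r" using rb x by blast
  have cb: "card B \<ge> 1" using B(2,3) by (simp add: Suc_leI card_gt_0_iff)
  have "r * 1 \<le> r * card B" using mult_le_mono2[OF cb] .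
  then have r3: "r \<le> r * card B" by simp
  have h: "2*r-1 = r + (r - 1)" using r1 by simp
  have r4: "(2*r-1) * card B = r * card B + (r - 1) * card B" unfolding h by (rule distrib_right)
  have r5: "card B * (r - 1) = (r - 1) * card B" by (rule mult.commute)
  have "card (ends x \<union> (\<Union>f\<in>B. ends f - ends x)) \<le> (2*r-1) * card B"
    using s1 s2 s3 s4 2 r3 r4 r5 by linarith
  then show ?thesis unfolding eq .
qed

lemma size_bound: "Valid M rs \<Longrightarrow> imatch M \<Longrightarrow>
   card (Uf M rs) \<le> (2*r-1) * card (Tf M rs) \<and> length rs \<le> card (Tf M rs)"
proof (induction rs)
  case Nil then show ?case by simp
next
  case (Cons x rs)
  let ?B = "Bs M (Tf M rs) x"
  have IH: "card (Uf M rs) \<le> (2*r-1) * card (Tf M rs)" "length rs \<le> card (Tf M rs)" using Cons by auto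
  have fM: "finite M" using im_fin Cons.prems(2) .
  have BM: "?B \<subseteq> M" using Bs_sub by blast
  have fB: "finite ?B" using finite_subset[OF BM fM] .
  have fT: "finite (Tf M rs)" using finite_subset[OF Tf_sub fM] .
  have Bne: "?B \<noteq> {}" "x \<in> Ed" using Cons.prems(1) by auto
  have BEd: "?B \<subseteq> Ed" using BM im_sub[OF Cons.prems(2)] by blast
  have hit: "\<forall>f\<in>?B. ends f \<inter> ends x \<noteq> {}" unfolding Bs_def by blast
  have cB: "card (ends x \<union> \<Union>(ends ` ?B)) \<le> (2*r-1) * card ?B" using blk[OF Bne(2) BEd fB Bne(1) hit] .
  have disj: "Tf M rs \<inter> ?B = {}" using Bs_sub by blast
  have cT: "card (Tf M (x # rs)) = card (Tf M rs) + card ?B" using card_Un_disjoint[OF fT fB disj] by simp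
  have "card (Uf M (x # rs)) \<le> card (Uf M rs) + card (ends x \<union> \<Union>(ends ` ?B))"
    using card_Un_le[of "Uf M rs" "ends x \<union> \<Union>(ends ` ?B)"] by (simp add: Un_assoc)
  also have "\<dots> \<le> (2*r-1) * card (Tf M rs) + (2*r-1) * card ?B" using IH(1) cB by linarith
  also have "\<dots> = (2*r-1) * card (Tf M (x # rs))" using cT by (simp add: algebra_simps)
  finally have 1: "card (Uf M (x # rs)) \<le> (2*r-1) * card (Tf M (x # rs))" .
  have "card ?B \<ge> 1" using fB Bne(1) by (simp add: Suc_leI card_gt_0_iff)
  then have 2: "length (x # rs) \<le> card (Tf M (x # rs))" using IH(2) cT by simp
  show ?case using 1 2 by blast
qed

end

context hm begin

lemma Bs_swap: "ends z \<inter> ends x = {} \<Longrightarrow> ends z \<inter> ends e = {} \<Longrightarrow> Bs (insert x (M - {e})) T z = Bs M T z"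
  unfolding Bs_def by blast

lemma Bs_top: "ends z \<inter> ends x = {} \<Longrightarrow> Bs (insert x (M - {e})) T z = Bs M T z - {e}"
  unfolding Bs_def by blast

lemma Tf_swap: "\<forall>w\<in>set rs. ends w \<inter> ends x = {} \<and> ends w \<inter> ends e = {} \<Longrightarrow> Tf (insert x (M - {e})) rs = Tf M rs"
proof (induction rs)
  case Nil then show ?case by simp
next
  case (Cons w rs)
  have "Tf (insert x (M - {e})) rs = Tf M rs" using Cons by simp
  moreover have "Bs (insert x (M - {e})) (Tf M rs) w = Bs M (Tf M rs) w" using Cons.prems Bs_swap by simp
  ultimately show ?case by simp
qed

lemma Uf_swap: "\<forall>w\<in>set rs. ends w \<inter> ends x = {} \<and> ends w \<inter> ends e = {} \<Longrightarrow> Uf (insert x (M - {e})) rs = Uf M rs"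
proof (induction rs)
  case Nil then show ?case by simp
next
  case (Cons w rs)
  have "Uf (insert x (M - {e})) rs = Uf M rs" "Tf (insert x (M - {e})) rs = Tf M rs" using Cons Tf_swap by auto
  moreover have "Bs (insert x (M - {e})) (Tf M rs) w = Bs M (Tf M rs) w" using Cons.prems Bs_swap by simp
  ultimately show ?case by simp
qed

lemma cnts_swap: "\<forall>w\<in>set rs. ends w \<inter> ends x = {} \<and> ends w \<inter> ends e = {} \<Longrightarrow> cnts (insert x (M - {e})) rs = cnts M rs"
proof (induction rs)
  case Nil then show ?case by simp
next
  case (Cons w rs)
  have "cnts (insert x (M - {e})) rs = cnts M rs" "Tf (insert x (M - {e})) rs = Tf M rs" using Cons Tf_swap by auto
  moreover have "Bs (insert x (M - {e})) (Tf M rs) w = Bs M (Tf M rs) w" using Cons.prems Bs_swap by simp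
  ultimately show ?case by simp
qed

lemma Valid_swap:
  "Valid M rs \<Longrightarrow> \<forall>w\<in>set rs. ends w \<inter> ends x = {} \<and> ends w \<inter> ends e = {} \<Longrightarrow>
   (\<forall>T. T \<subseteq> Tf M rs \<longrightarrow> sp (\<gamma> ` (insert x (M - {e}) - T)) = sp (\<gamma> ` (M - T))) \<Longrightarrow>
   Valid (insert x (M - {e})) rs"
proof (induction rs)
  case Nil then show ?case by simp
next
  case (Cons w rs)
  let ?M' = "insert x (M - {e})"
  have h1: "Valid M rs" "w \<in> Ed" "ends w \<inter> Uf M rs = {}" "\<gamma> w \<notin> sp (\<gamma> ` (M - Tf M rs))"
     "Bs M (Tf M rs) w \<noteq> {}" using Cons.prems(1) by auto
  have av: "\<forall>w\<in>set rs. ends w \<inter> ends x = {} \<and> ends w \<inter> ends e = {}" using Cons.prems(2) by simp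
  have sp1: "\<forall>T. T \<subseteq> Tf M rs \<longrightarrow> sp (\<gamma> ` (?M' - T)) = sp (\<gamma> ` (M - T))"
    using Cons.prems(3) by auto
  have V: "Valid ?M' rs" using Cons.IH[OF h1(1) av sp1] .
  have T: "Tf ?M' rs = Tf M rs" using Tf_swap[OF av] .
  have U: "Uf ?M' rs = Uf M rs" using Uf_swap[OF av] .
  have B: "Bs ?M' (Tf M rs) w = Bs M (Tf M rs) w" using Cons.prems(2) Bs_swap by simp
  have S: "sp (\<gamma> ` (?M' - Tf M rs)) = sp (\<gamma> ` (M - Tf M rs))" using sp1 by blast
  show ?case using V T U B S h1 by simp
qed

lemma len_cnts: "length (cnts M rs) = length rs"
  by (induction rs) auto

lemma cnts_split: "\<exists>p. length p = length tp \<and> cnts M (tp @ z # rs0) = p @ card (Bs M (Tf M rs0) z) # cnts M rs0"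
proof (induction tp)
  case Nil then show ?case by simp
next
  case (Cons a tp)
  then obtain p where "length p = length tp" "cnts M (tp @ z # rs0) = p @ card (Bs M (Tf M rs0) z) # cnts M rs0" by blast
  then show ?case by (intro exI[of _ "card (Bs M (Tf M (tp @ z # rs0)) a) # p"]) simp
qed

lemma cnts_le: "imatch M \<Longrightarrow> c \<in> set (cnts M rs) \<Longrightarrow> c \<le> card M"
proof (induction rs)
  case Nil then show ?case by simp
next
  case (Cons w rs)
  have "card (Bs M (Tf M rs) w) \<le> card M"
    using card_mono[OF im_fin[OF Cons.prems(1)]] Bs_sub by blast
  then show ?case using Cons by auto
qed

end

context hm begin

lemma ulem:
  "Valid M rs \<Longrightarrow> imatch M \<Longrightarrow> x \<in> Ed \<Longrightarrow> ends x \<inter> Uf M rs = {} \<Longrightarrow> Bs M (Tf M rs) x = {} \<Longrightarrow>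
   \<gamma> x \<notin> sp (\<gamma> ` (M - Tf M rs)) \<Longrightarrow>
   (\<exists>M'. imatch M' \<and> card M' = Suc (card M)) \<or>
   (\<exists>M' tp z rs0. rs = tp @ z # rs0 \<and> imatch M' \<and> card M' = card M \<and> Valid M' (z # rs0) \<and>
       cnts M' rs0 = cnts M rs0 \<and> card (Bs M' (Tf M' rs0) z) < card (Bs M (Tf M rs0) z))"
proof (induction rs arbitrary: M x)
  case Nil
  have av: "\<forall>f\<in>M. ends f \<inter> ends x = {}" using x_avoid_M[OF Nil.prems(2) Nil.prems(4) Nil.prems(5)] by blast
  have xE: "\<gamma> x \<in> E" using gE Nil.prems(3) by blast
  have ns: "\<gamma> x \<notin> sp (\<gamma> ` M)" using Nil.prems(6) by simp
  have ii: "indep (insert (\<gamma> x) (\<gamma> ` M)) \<and> \<gamma> x \<notin> \<gamma> ` M"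
    using notin_sp_indep[OF im_ind[OF Nil.prems(2)] xE ns] .
  have xM: "x \<notin> M" using av ends_ne[OF Nil.prems(3)] by blast
  have im: "imatch (insert x M)"
  proof (rule imI)
    show "insert x M \<subseteq> Ed" using im_sub[OF Nil.prems(2)] Nil.prems(3) by blast
  next
    fix e f assume ef: "e \<in> insert x M" "f \<in> insert x M" "e \<noteq> f"
    show "ends e \<inter> ends f = {}"
    proof (cases "e = x")
      case True then have "f \<in> M" using ef by blast
      then show ?thesis using av True by blast
    next
      case False
      then have eM: "e \<in> M" using ef by blast
      show ?thesis
      proof (cases "f = x")
        case True then show ?thesis using av eM by blast
      next
        case False then have "f \<in> M" using ef by blast
        then show ?thesis using im_disj[OF Nil.prems(2) eM] ef(3) by blast
      qed
    qed
  next
    have "x \<notin> M" using xM .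
    then have "M - {x} = M" by blast
    then show "inj_on \<gamma> (insert x M)" using im_inj[OF Nil.prems(2)] ii by simp
  next
    show "indep (\<gamma> ` insert x M)" using ii by simp
  qed
  have "card (insert x M) = Suc (card M)" using xM im_fin[OF Nil.prems(2)] by simp
  then show ?case using im by blast
next
  case (Cons z rs0)
  let ?T0 = "Tf M rs0"
  let ?B = "Bs M ?T0 z"
  let ?T1 = "Tf M (z # rs0)"
  have V0: "Valid M rs0" "z \<in> Ed" "ends z \<inter> Uf M rs0 = {}" "\<gamma> z \<notin> sp (\<gamma> ` (M - ?T0))" "?B \<noteq> {}"
    using Cons.prems(1) by auto
  have T1: "?T1 = ?T0 \<union> ?B" by simp
  have imM: "imatch M" using Cons.prems(2) .
  have xU1: "ends x \<inter> Uf M (z # rs0) = {}" using Cons.prems(4) .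
  have xU0: "ends x \<inter> Uf M rs0 = {}" using xU1 by auto
  have zx: "ends z \<inter> ends x = {}" using xU1 by auto
  have avM: "\<forall>f\<in>M. ends f \<inter> ends x = {}" using x_avoid_M[OF imM xU1 Cons.prems(5)] by blast
  show ?case
  proof (cases "\<gamma> x \<in> sp (\<gamma> ` (M - ?T0))")
    case False
    have B0: "Bs M ?T0 x = {}" using avM unfolding Bs_def by blast
    from Cons.IH[OF V0(1) imM Cons.prems(3) xU0 B0 False]
    show ?thesis
    proof
      assume "\<exists>M'. imatch M' \<and> card M' = Suc (card M)" then show ?thesis by blast
    next
      assume "\<exists>M' tp z' rs0'. rs0 = tp @ z' # rs0' \<and> imatch M' \<and> card M' = card M \<and> Valid M' (z' # rs0') \<and>
         cnts M' rs0' = cnts M rs0' \<and> card (Bs M' (Tf M' rs0') z') < card (Bs M (Tf M rs0') z')"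
      then obtain M' tp z' rs0' where h: "rs0 = tp @ z' # rs0'" "imatch M'" "card M' = card M"
        "Valid M' (z' # rs0')" "cnts M' rs0' = cnts M rs0'" "card (Bs M' (Tf M' rs0') z') < card (Bs M (Tf M rs0') z')"
        by blast
      have "z # rs0 = (z # tp) @ z' # rs0'" using h(1) by simp
      then show ?thesis using h(2-6) by blast
    qed
  next
    case True
    have iM: "indep (\<gamma> ` M)" using im_ind[OF imM] .
    have sub1: "\<gamma> ` (M - ?T0) \<subseteq> \<gamma> ` M" by blast
    have sub2: "\<gamma> ` (M - ?T1) \<subseteq> \<gamma> ` (M - ?T0)" using T1 by blast
    have ns: "\<gamma> x \<notin> sp (\<gamma> ` (M - ?T1))" using Cons.prems(6) .
    from swap[OF iM sub1 sub2 True ns] obtain b where b1: "b \<in> \<gamma> ` (M - ?T0) - \<gamma> ` (M - ?T1)"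
      and bb: "\<gamma> x \<notin> \<gamma> ` M - {b} \<and> indep (insert (\<gamma> x) (\<gamma> ` M - {b})) \<and>
       (\<forall>A3. \<gamma> ` (M - ?T0) \<subseteq> A3 \<longrightarrow> A3 \<subseteq> \<gamma> ` M \<longrightarrow> sp (insert (\<gamma> x) (A3 - {b})) = sp A3)"
      by (rule bexE)
    have b: "b \<in> \<gamma> ` (M - ?T0) - \<gamma> ` (M - ?T1)" "\<gamma> x \<notin> \<gamma> ` M - {b}"
       "indep (insert (\<gamma> x) (\<gamma> ` M - {b}))"
       "\<forall>A3. \<gamma> ` (M - ?T0) \<subseteq> A3 \<longrightarrow> A3 \<subseteq> \<gamma> ` M \<longrightarrow> sp (insert (\<gamma> x) (A3 - {b})) = sp A3"
      using b1 bb by auto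
    obtain e where e: "e \<in> M - ?T0" "b = \<gamma> e" using b(1) by blast
    have eB: "e \<in> ?B"
    proof (rule ccontr)
      assume "e \<notin> ?B"
      then have "e \<in> M - ?T1" using e(1) T1 by blast
      then show False using b(1) e(2) by blast
    qed
    define M' where "M' = insert x (M - {e})"
    have xM: "x \<notin> M" using avM ends_ne[OF Cons.prems(3)] by blast
    have injM: "inj_on \<gamma> M" using im_inj[OF imM] .
    have img: "\<gamma> ` (M' - T) = insert (\<gamma> x) (\<gamma> ` (M - T) - {b})" if T: "T \<subseteq> M" "e \<notin> T" for T
    proof -
      have 1: "M' - T = insert x ((M - T) - {e})" using T xM unfolding M'_def by blast
      have 2: "\<gamma> ` ((M - T) - {e}) = \<gamma> ` (M - T) - \<gamma> ` {e}"
        by (rule inj_on_image_set_diff[OF injM]) (use e(1) in auto)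
      show ?thesis using 1 2 e(2) by simp
    qed
    have imgM: "\<gamma> ` M' = insert (\<gamma> x) (\<gamma> ` M - {b})" using img[of "{}"] by simp
    have imM': "imatch M'"
    proof (rule imI)
      show "M' \<subseteq> Ed" using im_sub[OF imM] Cons.prems(3) unfolding M'_def by blast
    next
      fix f g assume fg: "f \<in> M'" "g \<in> M'" "f \<noteq> g"
      show "ends f \<inter> ends g = {}"
      proof (cases "f = x")
        case True then have "g \<in> M" using fg unfolding M'_def by blast
        then show ?thesis using avM True by blast
      next
        case False
        then have fM: "f \<in> M" using fg unfolding M'_def by blast
        show ?thesis
        proof (cases "g = x")
          case True then show ?thesis using avM fM by blast
        next
          case False then have "g \<in> M" using fg unfolding M'_def by blast
          then show ?thesis using im_disj[OF imM fM] fg(3) by blast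
        qed
      qed
    next
      have i1: "inj_on \<gamma> (M - {e})" using injM inj_on_subset by blast
      have "\<gamma> ` (M - {e}) = \<gamma> ` M - \<gamma> ` {e}"
        by (rule inj_on_image_set_diff[OF injM]) (use e(1) in auto)
      then have "\<gamma> ` (M - {e}) = \<gamma> ` M - {b}" using e(2) by simp
      then have "\<gamma> x \<notin> \<gamma> ` (M - {e})" using b(2) by simp
      moreover have "x \<notin> M - {e}" using xM by blast
      ultimately show "inj_on \<gamma> M'" unfolding M'_def using i1 by simp
    next
      show "indep (\<gamma> ` M')" using imgM b(3) by simp
    qed
    have eM: "e \<in> M" using e(1) by blast
    have cM': "card M' = card M"
    proof -
      have "card M' = Suc (card (M - {e}))" unfolding M'_def using xM im_fin[OF imM] by simp
      also have "\<dots> = card M" using card_Suc_Diff1[OF im_fin[OF imM] eM] .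
      finally show ?thesis .
    qed
    have eU0: "ends e \<inter> Uf M rs0 = {}" using avoid[OF imM eM] e(1) by blast
    have avr: "\<forall>w\<in>set rs0. ends w \<inter> ends x = {} \<and> ends w \<inter> ends e = {}"
      using lev_U[of _ rs0 M] xU0 eU0 by blast
    have TfE: "Tf M' rs0 = ?T0" unfolding M'_def using Tf_swap[OF avr] .
    have UfE: "Uf M' rs0 = Uf M rs0" unfolding M'_def using Uf_swap[OF avr] .
    have cntE: "cnts M' rs0 = cnts M rs0" unfolding M'_def using cnts_swap[OF avr] .
    have spE: "\<forall>T. T \<subseteq> ?T0 \<longrightarrow> sp (\<gamma> ` (M' - T)) = sp (\<gamma> ` (M - T))"
    proof (intro allI impI)
      fix T assume T: "T \<subseteq> ?T0"
      have TM: "T \<subseteq> M" using T Tf_sub by blast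
      have eT: "e \<notin> T" using T e(1) by blast
      have "\<gamma> ` (M - ?T0) \<subseteq> \<gamma> ` (M - T)" using T by blast
      moreover have "\<gamma> ` (M - T) \<subseteq> \<gamma> ` M" by blast
      ultimately have "sp (insert (\<gamma> x) (\<gamma> ` (M - T) - {b})) = sp (\<gamma> ` (M - T))" using b(4) by blast
      then show "sp (\<gamma> ` (M' - T)) = sp (\<gamma> ` (M - T))" using img[OF TM eT] by simp
    qed
    have VM': "Valid M' rs0" unfolding M'_def using Valid_swap[OF V0(1) avr] spE unfolding M'_def by blast
    have BsE: "Bs M' ?T0 z = ?B - {e}" unfolding M'_def using Bs_top[OF zx] .
    have spz: "\<gamma> z \<notin> sp (\<gamma> ` (M' - Tf M' rs0))" using spE V0(4) TfE by simp
    have zU: "ends z \<inter> Uf M' rs0 = {}" using UfE V0(3) by simp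
    have finB: "finite ?B" using finite_subset[OF _ im_fin[OF imM]] Bs_sub by blast
    show ?thesis
    proof (cases "?B - {e} = {}")
      case False
      have "Valid M' (z # rs0)" using VM' V0(2) zU spz BsE TfE False by simp
      moreover have "card (Bs M' (Tf M' rs0) z) < card ?B" using BsE TfE card_Diff1_less[OF finB eB] by simp
      moreover have "z # rs0 = [] @ z # rs0" by simp
      ultimately show ?thesis using imM' cM' cntE by blast
    next
      case True
      have B0: "Bs M' (Tf M' rs0) z = {}" using BsE TfE True by simp
      from Cons.IH[OF VM' imM' V0(2) zU B0 spz]
      show ?thesis
      proof
        assume "\<exists>M''. imatch M'' \<and> card M'' = Suc (card M')" then show ?thesis using cM' by simp
      next
        assume "\<exists>M'' tp z' rs0'. rs0 = tp @ z' # rs0' \<and> imatch M'' \<and> card M'' = card M' \<and> Valid M'' (z' # rs0') \<and>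
          cnts M'' rs0' = cnts M' rs0' \<and> card (Bs M'' (Tf M'' rs0') z') < card (Bs M' (Tf M' rs0') z')"
        then obtain M'' tp z' rs0' where h: "rs0 = tp @ z' # rs0'" "imatch M''" "card M'' = card M'"
          "Valid M'' (z' # rs0')" "cnts M'' rs0' = cnts M' rs0'"
          "card (Bs M'' (Tf M'' rs0') z') < card (Bs M' (Tf M' rs0') z')" by blast
        have av2: "\<forall>w\<in>set rs0'. ends w \<inter> ends x = {} \<and> ends w \<inter> ends e = {}" using avr h(1) by simp
        have z'in: "ends z' \<inter> ends x = {} \<and> ends z' \<inter> ends e = {}" using avr h(1) by simp
        have c2: "cnts M' rs0' = cnts M rs0'" unfolding M'_def using cnts_swap[OF av2] .
        have t2: "Tf M' rs0' = Tf M rs0'" unfolding M'_def using Tf_swap[OF av2] .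
        have b2: "Bs M' (Tf M rs0') z' = Bs M (Tf M rs0') z'" unfolding M'_def using Bs_swap z'in by blast
        have q1: "z # rs0 = (z # tp) @ z' # rs0'" using h(1) by simp
        have q4: "card (Bs M'' (Tf M'' rs0') z') < card (Bs M (Tf M rs0') z')" using h(6) t2 b2 by simp
        have q2: "card M'' = card M" using h(3) cM' by simp
        have q3: "cnts M'' rs0' = cnts M rs0'" using h(5) c2 by simp
        show ?thesis by (intro disjI2 exI conjI, rule q1, rule h(2), rule q2, rule h(4), rule q3, rule q4)
      qed
    qed
  qed
qed

end

definition numD :: "nat \<Rightarrow> nat list \<Rightarrow> nat" where
  "numD D xs = foldl (\<lambda>a b. a * D + b) 0 xs"

lemma foldl_acc: "foldl (\<lambda>a b. a * D + b) (a::nat) xs = a * D ^ length xs + foldl (\<lambda>a b. a * D + b) 0 xs"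
proof (induction xs arbitrary: a)
  case Nil then show ?case by simp
next
  case (Cons y xs)
  have 1: "foldl (\<lambda>a b. a * D + b) a (y # xs) = foldl (\<lambda>a b. a * D + b) (a * D + y) xs" by simp
  have 2: "foldl (\<lambda>a b. a * D + b) 0 (y # xs) = foldl (\<lambda>a b. a * D + b) y xs" by simp
  show ?case unfolding 1 2 Cons.IH[of "a * D + y"] Cons.IH[of y] by (simp add: algebra_simps)
qed

lemma num_snoc: "numD D (xs @ [x]) = numD D xs * D + x"
  unfolding numD_def by simp

lemma num_bound: "\<forall>z\<in>set xs. z < D \<Longrightarrow> numD D xs < D ^ length xs"
proof (induction xs rule: rev_induct)
  case Nil then show ?case by (simp add: numD_def)
next
  case (snoc x xs)
  have IH: "numD D xs + 1 \<le> D ^ length xs" using snoc by simp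
  have xD: "x < D" using snoc.prems by simp
  have "numD D (xs @ [x]) = numD D xs * D + x" by (rule num_snoc)
  also have "\<dots> < numD D xs * D + D" using xD by simp
  also have "\<dots> = (numD D xs + 1) * D" by simp
  also have "\<dots> \<le> D ^ length xs * D" using mult_le_mono1[OF IH] .
  finally show ?case by (simp add: mult.commute)
qed

lemma num_lex:
  assumes "length s1 = length s2" "\<forall>z\<in>set s1. z < D" "a < b"
  shows "numD D (p @ a # s1) < numD D (p @ b # s2)"
proof -
  let ?f = "\<lambda>a b. a * D + b"
  let ?L = "length s1"
  have e1: "numD D (p @ a # s1) = (numD D p * D + a) * D ^ ?L + numD D s1"
    unfolding numD_def using foldl_acc[of D "foldl ?f 0 p * D + a" s1] by simp
  have e2: "numD D (p @ b # s2) = (numD D p * D + b) * D ^ ?L + numD D s2"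
    unfolding numD_def using foldl_acc[of D "foldl ?f 0 p * D + b" s2] assms(1) by simp
  have "numD D s1 < D ^ ?L" using num_bound[OF assms(2)] .
  then have "numD D (p @ a # s1) < (numD D p * D + a) * D ^ ?L + D ^ ?L" using e1 by simp
  also have "\<dots> = (numD D p * D + a + 1) * D ^ ?L" by (simp add: algebra_simps)
  also have "\<dots> \<le> (numD D p * D + b) * D ^ ?L" using assms(3) by (intro mult_le_mono1) simp
  also have "\<dots> \<le> numD D (p @ b # s2)" using e2 by simp
  finally show ?thesis .
qed

context hm begin

definition pv :: "'e set \<Rightarrow> 'e list \<Rightarrow> nat list" where
  "pv M rs = rev (cnts M rs) @ replicate (d - length rs) d"

definition mu :: "'e set \<Rightarrow> 'e list \<Rightarrow> nat" where
  "mu M rs = (d - card M) * Suc d ^ d + numD (Suc d) (pv M rs)"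

lemma len_rs: "Valid M rs \<Longrightarrow> imatch M \<Longrightarrow> length rs \<le> card M"
proof -
  assume a: "Valid M rs" "imatch M"
  have "length rs \<le> card (Tf M rs)" using size_bound[OF a] by blast
  also have "\<dots> \<le> card M" using card_mono[OF im_fin[OF a(2)] Tf_sub] .
  finally show ?thesis .
qed

lemma pv_props: "Valid M rs \<Longrightarrow> imatch M \<Longrightarrow> card M < d \<Longrightarrow>
    length (pv M rs) = d \<and> (\<forall>z\<in>set (pv M rs). z < Suc d)"
proof -
  assume a: "Valid M rs" "imatch M" "card M < d"
  have l: "length rs \<le> d" using len_rs[OF a(1,2)] a(3) by simp
  have "length (pv M rs) = d" unfolding pv_def using l len_cnts[of M rs] by simp
  moreover have "\<forall>z\<in>set (pv M rs). z < Suc d"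
  proof
    fix z assume z: "z \<in> set (pv M rs)"
    then have "z \<in> set (cnts M rs) \<or> z = d" unfolding pv_def by (auto split: if_splits)
    then show "z < Suc d" using cnts_le[OF a(2)] a(3) by fastforce
  qed
  ultimately show ?thesis by blast
qed

lemma main:
  "Valid M rs \<Longrightarrow> imatch M \<Longrightarrow> card M < d \<Longrightarrow>
   (\<exists>M. indep_matching Ed ends indep \<gamma> M \<and> card M = d) \<or>
    (\<exists>k U M. k \<ge> 1 \<and> k \<le> d \<and> U \<subseteq> V \<and> card U \<le> (2*r - 1) * (k - 1) \<and>
       indep_matching (del_edges Ed ends U) ends indep \<gamma> M \<and> card M = d - k \<and>
       span E indep (\<gamma> ` M) = span E indep (\<gamma> ` del_edges Ed ends U))"
proof (induction "mu M rs" arbitrary: M rs rule: less_induct)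
  case less
  let ?T = "Tf M rs"
  let ?U = "Uf M rs"
  have imM: "imatch M" using less.prems(2) .
  have finM: "finite M" using im_fin[OF imM] .
  have TM: "?T \<subseteq> M" by (rule Tf_sub)
  have sb: "card ?U \<le> (2*r-1) * card ?T" "length rs \<le> card ?T" using size_bound[OF less.prems(1) imM] by auto
  have lrs: "length rs < d" using len_rs[OF less.prems(1) imM] less.prems(3) by simp
  show ?case
  proof (cases "\<forall>g\<in>del_edges Ed ends ?U. \<gamma> g \<in> sp (\<gamma> ` (M - ?T))")
    case True
    let ?N = "M - ?T"
    let ?k = "d - card ?N"
    have cN: "card ?N + card ?T = card M" using card_Diff_subset[OF finite_subset[OF TM finM] TM]
        card_mono[OF finM TM] by simp
    have k1: "?k \<ge> 1" using cN less.prems(3) by simp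
    have kd: "?k \<le> d" by simp
    have UV: "?U \<subseteq> V" using U_V[OF less.prems(1) im_sub[OF imM]] .
    have "card ?T \<le> ?k - 1" using cN less.prems(3) by simp
    then have "(2*r-1) * card ?T \<le> (2*r-1) * (?k - 1)" by (rule mult_le_mono2)
    then have cU: "card ?U \<le> (2*r-1) * (?k - 1)" using sb(1) by linarith
    have Ndel: "?N \<subseteq> del_edges Ed ends ?U"
    proof
      fix f assume f: "f \<in> ?N"
      have "f \<in> Ed" using f im_sub[OF imM] by blast
      moreover have "ends f \<inter> ?U = {}" using avoid[OF imM] f by blast
      ultimately show "f \<in> del_edges Ed ends ?U" unfolding del_edges_def by blast
    qed
    have imN: "indep_matching (del_edges Ed ends ?U) ends indep \<gamma> ?N"
      unfolding indep_matching_def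
    proof (intro conjI)
      show "?N \<subseteq> del_edges Ed ends ?U" by (rule Ndel)
      show "\<forall>e\<in>?N. \<forall>f\<in>?N. e \<noteq> f \<longrightarrow> ends e \<inter> ends f = {}" using im_disj[OF imM] by blast
      show "inj_on \<gamma> ?N" by (rule inj_on_subset[OF im_inj[OF imM]]) (rule Diff_subset)
      show "indep (\<gamma> ` ?N)" by (rule indep_mono[OF im_ind[OF imM]]) (rule image_mono, rule Diff_subset)
    qed
    have cNk: "card ?N = d - ?k" using cN less.prems(3) by simp
    have delE: "\<gamma> ` del_edges Ed ends ?U \<subseteq> E" using gE unfolding del_edges_def by blast
    have s1: "\<gamma> ` ?N \<subseteq> sp (\<gamma> ` del_edges Ed ends ?U)"
      using sp_sub[OF delE] Ndel by blast
    have s2: "\<gamma> ` del_edges Ed ends ?U \<subseteq> sp (\<gamma> ` ?N)" using True by blast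
    have spq: "sp (\<gamma> ` ?N) = sp (\<gamma> ` del_edges Ed ends ?U)" using sp_eq[OF s1 s2] .
    have "\<exists>k U M. k \<ge> 1 \<and> k \<le> d \<and> U \<subseteq> V \<and> card U \<le> (2*r - 1) * (k - 1) \<and>
       indep_matching (del_edges Ed ends U) ends indep \<gamma> M \<and> card M = d - k \<and>
       span E indep (\<gamma> ` M) = span E indep (\<gamma> ` del_edges Ed ends U)"
      by (intro exI conjI, rule k1, rule kd, rule UV, rule cU, rule imN, rule cNk, rule spq)
    then show ?thesis by blast
  next
    case False
    then obtain x where x: "x \<in> del_edges Ed ends ?U" "\<gamma> x \<notin> sp (\<gamma> ` (M - ?T))" by blast
    have xEd: "x \<in> Ed" and xU: "ends x \<inter> ?U = {}" using x(1) unfolding del_edges_def by auto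
    have pvM: "pv M rs = rev (cnts M rs) @ d # replicate (d - Suc (length rs)) d"
      unfolding pv_def using lrs by (simp add: Suc_diff_Suc[symmetric] del: replicate.simps) (metis Suc_diff_Suc replicate_Suc)
    show ?thesis
    proof (cases "Bs M ?T x = {}")
      case False
      have V': "Valid M (x # rs)" using less.prems(1) xEd xU x(2) False by simp
      have cB: "card (Bs M ?T x) < d" using card_mono[OF finM] Bs_sub less.prems(3)
        by (meson Diff_subset le_less_trans order_trans)
      have pvx: "pv M (x # rs) = rev (cnts M rs) @ card (Bs M ?T x) # replicate (d - Suc (length rs)) d"
        unfolding pv_def by simp
      have "numD (Suc d) (pv M (x # rs)) < numD (Suc d) (pv M rs)"
        unfolding pvx pvM by (rule num_lex) (use cB in auto)
      then have "mu M (x # rs) < mu M rs" unfolding mu_def by simp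
      then show ?thesis using less.hyps V' imM less.prems(3) by blast
    next
      case True
      from ulem[OF less.prems(1) imM xEd xU True x(2)]
      show ?thesis
      proof
        assume "\<exists>M'. imatch M' \<and> card M' = Suc (card M)"
        then obtain M' where M': "imatch M'" "card M' = Suc (card M)" by blast
        show ?thesis
        proof (cases "card M' = d")
          case True then show ?thesis using M' by blast
        next
          case False
          then have lt: "card M' < d" using M' less.prems(3) by simp
          have V0: "Valid M' []" by simp
          have pp: "length (pv M' []) = d \<and> (\<forall>z\<in>set (pv M' []). z < Suc d)" using pv_props[OF V0 M'(1) lt] .
          have "numD (Suc d) (pv M' []) < Suc d ^ d" using num_bound[of "pv M' []" "Suc d"] pp by simp
          then have "mu M' [] < (d - card M') * Suc d ^ d + Suc d ^ d" unfolding mu_def by simp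
          also have "\<dots> = (d - card M) * Suc d ^ d" using M'(2) less.prems(3)
            by (simp add: Suc_diff_Suc[symmetric] algebra_simps)
          also have "\<dots> \<le> mu M rs" unfolding mu_def by simp
          finally show ?thesis using less.hyps V0 M'(1) lt by blast
        qed
      next
        assume "\<exists>M' tp z rs0. rs = tp @ z # rs0 \<and> imatch M' \<and> card M' = card M \<and> Valid M' (z # rs0) \<and>
          cnts M' rs0 = cnts M rs0 \<and> card (Bs M' (Tf M' rs0) z) < card (Bs M (Tf M rs0) z)"
        then obtain M' tp z rs0 where h: "rs = tp @ z # rs0" "imatch M'" "card M' = card M" "Valid M' (z # rs0)"
          "cnts M' rs0 = cnts M rs0" "card (Bs M' (Tf M' rs0) z) < card (Bs M (Tf M rs0) z)" by blast
        obtain p where p: "length p = length tp" "cnts M (tp @ z # rs0) = p @ card (Bs M (Tf M rs0) z) # cnts M rs0"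
          using cnts_split by blast
        have pv1: "pv M' (z # rs0) = rev (cnts M rs0) @ card (Bs M' (Tf M' rs0) z) # replicate (d - Suc (length rs0)) d"
          unfolding pv_def using h(5) by simp
        have pv2: "pv M rs = rev (cnts M rs0) @ card (Bs M (Tf M rs0) z) # (rev p @ replicate (d - length rs) d)"
          unfolding pv_def h(1) p(2) by simp
        have len: "length (rev p @ replicate (d - length rs) d) = length (replicate (d - Suc (length rs0)) d)"
          using h(1) p(1) lrs by simp
        have "numD (Suc d) (pv M' (z # rs0)) < numD (Suc d) (pv M rs)"
          unfolding pv1 pv2 by (rule num_lex) (use len h(6) in auto)
        then have "mu M' (z # rs0) < mu M rs" unfolding mu_def using h(3) by simp
        then show ?thesis using less.hyps h(4) h(2) h(3) less.prems(3) by simp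
      qed
    qed
  qed
qed

end

theorem lemma2:
  fixes V :: "'a set" and Ed :: "'e set" and ends :: "'e \<Rightarrow> 'a set"
    and E :: "'b set" and indep :: "'b set \<Rightarrow> bool" and \<gamma> :: "'e \<Rightarrow> 'b"
    and r d :: nat
  assumes "r \<ge> 1"
    and "hypergraph V Ed ends"
    and "\<forall>e\<in>Ed. card (ends e) \<le> r"
    and "matroid E indep"
    and "mrank indep E = d" and "d \<ge> 1"
    and "\<forall>e\<in>Ed. \<gamma> e \<in> E"
  shows "(\<exists>M. indep_matching Ed ends indep \<gamma> M \<and> card M = d) \<or>
    (\<exists>k U M. k \<ge> 1 \<and> k \<le> d \<and> U \<subseteq> V \<and> card U \<le> (2*r - 1) * (k - 1) \<and>
       indep_matching (del_edges Ed ends U) ends indep \<gamma> M \<and> card M = d - k \<and>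
       span E indep (\<gamma> ` M) = span E indep (\<gamma> ` del_edges Ed ends U))"
proof -
  interpret hm E indep V Ed ends \<gamma> r d
    by unfold_locales (use assms in auto)
  have "Valid {} []" by simp
  moreover have "imatch {}" by (rule imI) (auto intro: indep_empty)
  moreover have "card ({} :: 'e set) < d" using assms(6) by simp
  ultimately show ?thesis by (rule main)
qed

end
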